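(* For each integer $k\ge 3$ and each integer $t\ge0$: $m_2^{(1)}(k-1,3t+2)=t v_k+2^{k-1}$, $m_2^{(1)}(k-1,3t+3)=(t+1)v_k$, and $m_2^{(1)}(k-1,3t+4)=(t+1)v_k+1$, where $v_k=2^k-1$.
   Context: For a prime power $q$ and $N\ge1$, a multiset of points in $\mathrm{PG}(N,q)$ is a map $\mathcal{K}$ from the points to $\mathbb{Z}_{\ge0}$, with $\mathcal{K}(S)=\sum_{P\in S}\mathcal{K}(P)$; its cardinality is $\mathcal{K}(\mathrm{PG}(N,q))$. Dimensions are projective (lines have dimension 1). For $0\le r\le N-1$ and a positive integer $w$, $m_q^{(r)}(N,w)$ is the maximum cardinality of a multiset of points in $\mathrm{PG}(N,q)$ such that every $r$-dimensional subspace has multiplicity at most $w$. *)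

theory Defs
  imports Main
begin

text \<open>The vector space GF(2)^(N+1) is modelled
  as the power set of the coordinate set {0..N}: a vector is identified with its support,
  and vector addition over GF(2) is symmetric difference.  The points of PG(N,2)
  (one-dimensional subspaces) are exactly the nonzero vectors.\<close>

definition bvecs :: "nat \<Rightarrow> nat set set" where
  "bvecs N = Pow {0..N}"

definition bpoints :: "nat \<Rightarrow> nat set set" where
  "bpoints N = bvecs N - {{}}"

definition badd :: "nat set \<Rightarrow> nat set \<Rightarrow> nat set" where
  "badd a b = (a - b) \<union> (b - a)"

text \<open>An r-dimensional projective subspace of PG(N,2), given by its set of points S:
  S together with the zero vector is a linear subspace (closed under addition) of
  vector dimension r+1, i.e. of cardinality 2^(r+1).\<close>

definition bsubspace :: "nat \<Rightarrow> nat \<Rightarrow> nat set set \<Rightarrow> bool" where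
  "bsubspace N r S \<longleftrightarrow> S \<subseteq> bpoints N
     \<and> (\<forall>a\<in>insert {} S. \<forall>b\<in>insert {} S. badd a b \<in> insert {} S)
     \<and> card (insert {} S) = 2 ^ (r + 1)"

text \<open>A multiset of points is a function K from points to nonnegative integers
  (values outside the point set are irrelevant).  Its multiplicity on a set S of points
  is the sum over S; its cardinality is its multiplicity on the whole space.\<close>

definition admissible :: "nat \<Rightarrow> nat \<Rightarrow> nat \<Rightarrow> (nat set \<Rightarrow> nat) \<Rightarrow> bool" where
  "admissible N r w K \<longleftrightarrow> (\<forall>S. bsubspace N r S \<longrightarrow> sum K S \<le> w)"

definition m2 :: "nat \<Rightarrow> nat \<Rightarrow> nat \<Rightarrow> nat" where
  "m2 r N w = Max {sum K (bpoints N) | K. admissible N r w K}"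

end

theory Submission
  imports Defs
begin

lemma badd_self[simp]: "badd a a = {}" by (auto simp: badd_def)
lemma badd_empty1[simp]: "badd {} b = b" by (auto simp: badd_def)
lemma badd_empty2[simp]: "badd b {} = b" by (auto simp: badd_def)
lemma badd_eq_empty: "badd a b = {} \<longleftrightarrow> a = b" by (auto simp: badd_def)
lemma badd_comm: "badd a b = badd b a" by (auto simp: badd_def)
lemma badd_cancel1[simp]: "badd a (badd a x) = x" by (auto simp: badd_def)
lemma badd_cancel2[simp]: "badd x (badd a x) = a" by (auto simp: badd_def)
lemma badd_cancel3[simp]: "badd (badd a x) a = x" by (auto simp: badd_def)
lemma badd_cancel4[simp]: "badd (badd a x) x = a" by (auto simp: badd_def)
lemma badd_eq_left: "badd a x = a \<longleftrightarrow> x = {}" by (auto simp: badd_def)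
lemma badd_eq_right: "badd a x = x \<longleftrightarrow> a = {}" by (auto simp: badd_def)

lemma badd_pt: "a \<in> bpoints N \<Longrightarrow> x \<in> bpoints N \<Longrightarrow> a \<noteq> x \<Longrightarrow> badd a x \<in> bpoints N"
  by (auto simp: bpoints_def bvecs_def badd_def)

lemma finite_bpoints[simp]: "finite (bpoints N)"
  by (simp add: bpoints_def bvecs_def)

lemma card_bpoints: "card (bpoints N) = 2 ^ (N + 1) - 1"
proof -
  have "card (bvecs N) = 2 ^ (N+1)" by (simp add: bvecs_def card_Pow)
  moreover have "{} \<in> bvecs N" by (simp add: bvecs_def)
  ultimately show ?thesis by (simp add: bpoints_def bvecs_def card_Diff_singleton)
qed

lemma line_sub:
  assumes a: "a \<in> bpoints N" and x: "x \<in> bpoints N" and ax: "a \<noteq> x"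
  shows "bsubspace N 1 {a, x, badd a x}"
proof -
  have ne: "a \<noteq> {}" "x \<noteq> {}" using a x by (auto simp: bpoints_def)
  have c: "badd a x \<noteq> {}" "badd a x \<noteq> a" "badd a x \<noteq> x"
    using ax ne by (auto simp: badd_eq_empty badd_eq_left badd_eq_right)
  have sub: "{a, x, badd a x} \<subseteq> bpoints N" using badd_pt[OF a x ax] a x by auto
  have cl: "\<forall>u\<in>insert {} {a, x, badd a x}. \<forall>v\<in>insert {} {a, x, badd a x}.
      badd u v \<in> insert {} {a, x, badd a x}"
    by (auto simp: badd_comm[of x a])
  have "card (insert {} {a, x, badd a x}) = 4" using ne c ax by auto
  then show ?thesis using sub cl by (simp add: bsubspace_def)
qed

lemma point_bound:
  assumes N: "N \<ge> 1" and adm: "admissible N 1 w K" and a: "a \<in> bpoints N"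
  shows "K a \<le> w \<and> sum K (bpoints N) + (2^N - 2) * K a \<le> (2^N - 1) * w"
proof -
  define A where "A = bpoints N - {a}"
  have fA: "finite A" by (simp add: A_def)
  have line: "K a + K x + K (badd a x) \<le> w" if "x \<in> A" for x
  proof -
    have x: "x \<in> bpoints N" "x \<noteq> a" using that by (auto simp: A_def)
    have ne: "a \<noteq> {}" "x \<noteq> {}" using a x by (auto simp: bpoints_def)
    have c: "badd a x \<noteq> {}" "badd a x \<noteq> a" "badd a x \<noteq> x"
      using x ne by (auto simp: badd_eq_empty badd_eq_left badd_eq_right)
    have "sum K {a, x, badd a x} \<le> w"
      using adm line_sub[OF a x(1)] x(2) by (auto simp: admissible_def)
    then show ?thesis using c x(2) by (simp add: add.assoc)
  qed
  have Kaw: "K a \<le> w"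
  proof -
    obtain x where "x \<in> A"
    proof (cases "a = {0}")
      case True
      have "{1} \<in> A" using True N by (auto simp: A_def bpoints_def bvecs_def)
      then show ?thesis using that by blast
    next
      case False
      have "{0} \<in> A" using False by (auto simp: A_def bpoints_def bvecs_def)
      then show ?thesis using that by blast
    qed
    then show ?thesis using line by fastforce
  qed
  have mapA: "badd a x \<in> A" if "x \<in> A" for x
    using that a badd_pt[of a N x] by (auto simp: A_def bpoints_def badd_eq_left)
  have reidx: "sum (\<lambda>x. K (badd a x)) A = sum K A"
    by (rule sum.reindex_bij_witness[where i="badd a" and j="badd a"]) (auto simp: mapA)
  have "2 * sum K A = sum (\<lambda>x. K x + K (badd a x)) A"
    by (simp add: sum.distrib reidx)
  also have "\<dots> \<le> sum (\<lambda>x. w - K a) A"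
    by (rule sum_mono) (use line in fastforce)
  also have "\<dots> = card A * (w - K a)" by simp
  also have "card A = 2 * (2^N - 1)"
  proof -
    have "card A = 2 ^ (N + 1) - 1 - 1" using a by (simp add: A_def card_bpoints)
    moreover have "(2::nat) ^ N \<ge> 2" using N
      by (metis power_increasing power_one_right one_le_numeral)
    ultimately show ?thesis by simp
  qed
  finally have s: "sum K A \<le> (2^N - 1) * (w - K a)" by simp
  have n: "sum K (bpoints N) = K a + sum K A"
    using a by (simp add: A_def sum.remove)
  have h2: "(2::nat) ^ N \<ge> 2" using N
    by (metis power_increasing power_one_right one_le_numeral)
  define h where "h = (2::nat)^N"
  have s': "sum K A \<le> (h - 1) * (w - K a)" using s by (simp add: h_def)
  have "(h - 1) * (w - K a) + (h - 1) * K a = (h - 1) * w"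
    using Kaw by (metis add_mult_distrib2 le_add_diff_inverse2)
  moreover have "K a + (h - 2) * K a = (h - 1) * K a"
  proof -
    have "h - 1 = Suc (h - 2)" using h2 unfolding h_def[symmetric] by simp
    then show ?thesis by simp
  qed
  ultimately have "sum K (bpoints N) + (h - 2) * K a \<le> (h - 1) * w"
    using n s' by linarith
  then show ?thesis using Kaw by (simp add: h_def)
qed


lemma upper:
  assumes N: "N \<ge> 1" and adm: "admissible N 1 w K"
  shows "\<exists>M. sum K (bpoints N) \<le> M * (2^(N+1) - 1)
            \<and> sum K (bpoints N) + (2^N - 2) * M \<le> (2^N - 1) * w"
proof -
  have ne: "bpoints N \<noteq> {}"
    by (metis bpoints_def bvecs_def Diff_iff Pow_iff atLeastAtMost_iff bot_nat_0.extremum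
        empty_iff insert_subset subsetI singletonD emptyE insert_not_empty empty_subsetI)
  define M where "M = Max (K ` bpoints N)"
  have "M \<in> K ` bpoints N" unfolding M_def by (rule Max_in) (use ne in auto)
  then obtain a where a: "a \<in> bpoints N" "K a = M" by auto
  have le: "K x \<le> M" if "x \<in> bpoints N" for x
    unfolding M_def using that by simp
  have "sum K (bpoints N) \<le> sum (\<lambda>_. M) (bpoints N)" by (rule sum_mono) (use le in auto)
  then have "sum K (bpoints N) \<le> M * (2^(N+1) - 1)" by (simp add: card_bpoints mult.commute)
  moreover have "sum K (bpoints N) + (2^N - 2) * M \<le> (2^N - 1) * w"
    using point_bound[OF N adm a(1)] a(2) by simp
  ultimately show ?thesis by blast
qed

lemma max_eq:
  assumes "admissible N 1 w K0" "sum K0 (bpoints N) = v"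
    and "\<And>K. admissible N 1 w K \<Longrightarrow> sum K (bpoints N) \<le> v"
  shows "m2 1 N w = v"
proof -
  let ?S = "{sum K (bpoints N) | K. admissible N 1 w K}"
  have fin: "finite ?S" by (rule finite_subset[of _ "{..v}"]) (use assms(3) in auto)
  show ?thesis unfolding m2_def
    by (rule Max_eqI[OF fin]) (use assms in auto)
qed

lemma card_line: "bsubspace N 1 S \<Longrightarrow> card S = 3 \<and> finite S"
proof -
  assume S: "bsubspace N 1 S"
  have "{} \<notin> S" using S by (auto simp: bsubspace_def bpoints_def)
  moreover have c4: "card (insert {} S) = 4" using S by (simp add: bsubspace_def)
  moreover have "finite S" using c4 by (metis card.infinite finite_insert zero_neq_numeral)
  ultimately show ?thesis by simp
qed

lemma adm_const: "admissible N 1 (3 * c + e) (\<lambda>_. c)"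
  unfolding admissible_def using card_line by simp

lemma adm_K1: "admissible N 1 (3 * t + 2) (\<lambda>x. t + (if 0 \<in> x then 1 else 0))"
  unfolding admissible_def
proof (intro allI impI)
  fix S assume S: "bsubspace N 1 S"
  then have c3: "card S = 3" and fS: "finite S" using card_line by auto
  have "card (S \<inter> {x. 0 \<in> x}) \<le> 2"
  proof (rule ccontr)
    assume "\<not> ?thesis"
    moreover have "card (S \<inter> {x. 0 \<in> x}) \<le> card S" by (rule card_mono[OF fS]) auto
    ultimately have "card (S \<inter> {x. 0 \<in> x}) = card S" using c3 by simp
    then have "S \<inter> {x. 0 \<in> x} = S" using fS by (metis card_subset_eq inf_le1)
    then have all0: "\<forall>x\<in>S. 0 \<in> x" by auto
    obtain a b c where abc: "S = {a, b, c}" "a \<noteq> b" "a \<noteq> c" "b \<noteq> c"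
      using c3 card_3_iff by metis
    have "badd a b \<in> insert {} S" using S abc by (simp add: bsubspace_def)
    moreover have "0 \<notin> badd a b" using all0 abc by (auto simp: badd_def)
    moreover have "badd a b \<noteq> {}" using abc by (simp add: badd_eq_empty)
    ultimately show False using all0 by auto
  qed
  moreover have "sum (\<lambda>x. t + (if 0 \<in> x then 1 else 0)) S = 3 * t + card (S \<inter> {x. 0 \<in> x})"
    using fS c3 by (simp add: sum.distrib sum.If_cases)
  ultimately show "sum (\<lambda>x. t + (if 0 \<in> x then 1 else 0)) S \<le> 3 * t + 2" by simp
qed

lemma adm_K2: "admissible N 1 (3 * t + 4) (\<lambda>x. (t + 1) + (if x = {0} then 1 else 0))"
  unfolding admissible_def
proof (intro allI impI)
  fix S assume S: "bsubspace N 1 S"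
  then have c3: "card S = 3" and fS: "finite S" using card_line by auto
  have "card (S \<inter> {x. x = {0}}) \<le> 1"
    by (rule order_trans[OF card_mono[of "{{0}}"]]) auto
  moreover have "sum (\<lambda>x. (t + 1) + (if x = {0} then 1 else 0)) S = 3 * (t + 1) + card (S \<inter> {x. x = {0}})"
    using fS c3 by (simp only: sum.distrib sum.If_cases) simp
  ultimately show "sum (\<lambda>x. (t + 1) + (if x = {0} then 1 else 0)) S \<le> 3 * t + 4" by simp
qed

lemma card_half: "card (bpoints N \<inter> {x. 0 \<in> x}) = 2 ^ N"
proof -
  have eq: "bpoints N \<inter> {x. 0 \<in> x} = insert 0 ` Pow {1..N}"
  proof
    show "bpoints N \<inter> {x. 0 \<in> x} \<subseteq> insert 0 ` Pow {1..N}"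
    proof
      fix x assume x: "x \<in> bpoints N \<inter> {x. 0 \<in> x}"
      then have "x = insert 0 (x - {0})" by auto
      moreover have "x - {0} \<in> Pow {1..N}" using x by (auto simp: bpoints_def bvecs_def)
      ultimately show "x \<in> insert 0 ` Pow {1..N}" by blast
    qed
    show "insert 0 ` Pow {1..N} \<subseteq> bpoints N \<inter> {x. 0 \<in> x}"
      by (auto simp: bpoints_def bvecs_def)
  qed
  have inj: "inj_on (insert 0) (Pow {1..N})"
    by (rule inj_onI) (metis Diff_insert_absorb Pow_iff atLeastAtMost_iff not_one_le_zero subsetD)
  show ?thesis unfolding eq using card_image[OF inj] by (simp add: card_Pow)
qed

lemma sum_half: "sum (\<lambda>x. if 0 \<in> x then 1 else 0) (bpoints N) = (2::nat) ^ N"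
proof -
  have "sum (\<lambda>x. if 0 \<in> x then 1 else 0) (bpoints N) = card (bpoints N \<inter> {x. 0 \<in> x})"
    by (simp add: sum.If_cases)
  then show ?thesis by (simp add: card_half)
qed

theorem mainTheorem4:
  fixes k t :: nat
  assumes "k \<ge> 3"
  shows "m2 1 (k - 1) (3 * t + 2) = t * (2 ^ k - 1) + 2 ^ (k - 1)
       \<and> m2 1 (k - 1) (3 * t + 3) = (t + 1) * (2 ^ k - 1)
       \<and> m2 1 (k - 1) (3 * t + 4) = (t + 1) * (2 ^ k - 1) + 1"
proof -
  define N where "N = k - 1"
  have N: "N \<ge> 1" "N \<ge> 2" using assms by (auto simp: N_def)
  have kN: "k = N + 1" using assms by (simp add: N_def)
  define g where "g = (2::nat) ^ N - 2"
  have h4: "(2::nat) ^ N \<ge> 4"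
  proof -
    have "(2::nat) ^ 2 \<le> 2 ^ N" using N(2) by (rule power_increasing) simp
    then show ?thesis by simp
  qed
  have hg: "(2::nat) ^ N = g + 2" using h4 by (simp add: g_def)
  have v: "(2::nat) ^ (N+1) - 1 = 2 * g + 3" using hg by simp
  have h1: "(2::nat) ^ N - 1 = g + 1" using hg by simp
  have h2: "(2::nat) ^ N - 2 = g" by (simp add: g_def)
  have cb: "card (bpoints N) = 2 * g + 3" using card_bpoints[of N] v by simp
  have up: "\<exists>M. n \<le> M * (2 * g + 3) \<and> n + g * M \<le> (g + 1) * w"
    if "admissible N 1 w K" "n = sum K (bpoints N)" for w K n
    using upper[OF N(1) that(1)] that(2) unfolding v h1 h2 by simp
  have A: "m2 1 N (3 * t + 2) = t * (2 * g + 3) + (g + 2)"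
  proof (rule max_eq[OF adm_K1])
    show "sum (\<lambda>x. t + (if 0 \<in> x then 1 else 0)) (bpoints N) = t * (2 * g + 3) + (g + 2)"
      by (simp only: sum.distrib sum_half) (simp add: cb hg algebra_simps)
    fix K assume adm: "admissible N 1 (3 * t + 2) K"
    obtain M where M: "sum K (bpoints N) \<le> M * (2 * g + 3)"
        "sum K (bpoints N) + g * M \<le> (g + 1) * (3 * t + 2)"
      using up[OF adm refl] by blast
    show "sum K (bpoints N) \<le> t * (2 * g + 3) + (g + 2)"
    proof (cases "M \<le> t")
      case True
      then have "M * (2 * g + 3) \<le> t * (2 * g + 3)" by (intro mult_right_mono) auto
      then show ?thesis using M(1) by linarith
    next
      case False
      then have "g * (t + 1) \<le> g * M" by (intro mult_left_mono) auto
      then show ?thesis using M(2) by (simp add: algebra_simps)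
    qed
  qed
  have adm3: "admissible N 1 (3 * t + 3) (\<lambda>_. t + 1)"
  proof -
    have "3 * (t + 1) + 0 = 3 * t + 3" by simp
    then show ?thesis using adm_const[of N "t+1" 0] by metis
  qed
  have B: "m2 1 N (3 * t + 3) = (t + 1) * (2 * g + 3)"
  proof (rule max_eq[OF adm3])
    show "sum (\<lambda>_. t + 1) (bpoints N) = (t + 1) * (2 * g + 3)"
      by (simp add: cb mult.commute)
    fix K assume adm: "admissible N 1 (3 * t + 3) K"
    obtain M where M: "sum K (bpoints N) \<le> M * (2 * g + 3)"
        "sum K (bpoints N) + g * M \<le> (g + 1) * (3 * t + 3)"
      using up[OF adm refl] by blast
    show "sum K (bpoints N) \<le> (t + 1) * (2 * g + 3)"
    proof (cases "M \<le> t + 1")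
      case True
      then have "M * (2 * g + 3) \<le> (t + 1) * (2 * g + 3)" by (intro mult_right_mono) auto
      then show ?thesis using M(1) by linarith
    next
      case False
      then have "g * (t + 2) \<le> g * M" by (intro mult_left_mono) auto
      then show ?thesis using M(2) by (simp add: algebra_simps)
    qed
  qed
  have C: "m2 1 N (3 * t + 4) = (t + 1) * (2 * g + 3) + 1"
  proof (rule max_eq[OF adm_K2])
    have z: "{0} \<in> bpoints N" by (simp add: bpoints_def bvecs_def)
    then have "bpoints N \<inter> {x. x = {0}} = {{0}}" by auto
    then show "sum (\<lambda>x. (t + 1) + (if x = {0} then 1 else 0)) (bpoints N) = (t + 1) * (2 * g + 3) + 1"
      by (simp only: sum.distrib sum.If_cases) (simp add: cb mult.commute z)
    fix K assume adm: "admissible N 1 (3 * t + 4) K"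
    obtain M where M: "sum K (bpoints N) \<le> M * (2 * g + 3)"
        "sum K (bpoints N) + g * M \<le> (g + 1) * (3 * t + 4)"
      using up[OF adm refl] by blast
    show "sum K (bpoints N) \<le> (t + 1) * (2 * g + 3) + 1"
    proof (cases "M \<le> t + 1")
      case True
      then have "M * (2 * g + 3) \<le> (t + 1) * (2 * g + 3)" by (intro mult_right_mono) auto
      then show ?thesis using M(1) by linarith
    next
      case False
      then have "g * (t + 2) \<le> g * M" by (intro mult_left_mono) auto
      then show ?thesis using M(2) by (simp add: algebra_simps)
    qed
  qed
  have e1: "(2::nat) ^ k - 1 = 2 * g + 3" using v kN by simp
  have e2: "(2::nat) ^ (k - 1) = g + 2" using hg by (simp add: N_def)
  show ?thesis using A B C unfolding e1 e2 N_def by simp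
qed

end
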